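(* Let $I$ be a finite tree and let $\Sigma$ be a morphism of $R_0(I)$ from an orientation $\Gamma$ to itself which is not the identity. Then every reduced expression for $\Sigma$ contains $\Sigma_i$ for every vertex $i\in I$.
   Context: Let $I$ be a finite tree. $\mathrm{Quiv}(I)$ is the set of orientations of $I$. For $\Gamma\in\mathrm{Quiv}(I)$ and a source or sink $i$ of $\Gamma$, $s_i\Gamma$ is the orientation obtained by reversing all arrows at $i$. The groupoid $R_0(I)$ has object set $\mathrm{Quiv}(I)$ and is generated by elementary isomorphisms $\Sigma_i:\Gamma\to s_i\Gamma$ (for each $\Gamma$ and each source or sink $i$ of $\Gamma$) subject to the relations, whenever both sides are defined: (R1) $\Sigma_i^2=1$; (R2) $\Sigma_i\Sigma_j=\Sigma_j\Sigma_i$ when $i,j$ are not adjacent. An expression for a morphism $\Sigma$ is a composable word $\Sigma_{i_1}\cdots\Sigma_{i_r}$ equal to $\Sigma$; $\ell(\Sigma)$ is the minimal length of an expression, and an expression of length $\ell(\Sigma)$ is called reduced. *)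

theory Defs
  imports Main
begin

definition is_cycle :: "('a \<times> 'a) set \<Rightarrow> 'a list \<Rightarrow> bool" where
  "is_cycle E vs \<longleftrightarrow> length vs \<ge> 3 \<and> distinct vs \<and>
     (\<forall>k < length vs - 1. (vs ! k, vs ! Suc k) \<in> E) \<and> (last vs, hd vs) \<in> E"

definition is_tree :: "'a set \<Rightarrow> ('a \<times> 'a) set \<Rightarrow> bool" where
  "is_tree V E \<longleftrightarrow> finite V \<and> V \<noteq> {} \<and> E \<subseteq> V \<times> V \<and> sym E \<and> irrefl E \<and>
     (\<forall>x\<in>V. \<forall>y\<in>V. (x, y) \<in> E\<^sup>*) \<and> (\<nexists>vs. is_cycle E vs)"

definition is_orientation :: "('a \<times> 'a) set \<Rightarrow> ('a \<times> 'a) set \<Rightarrow> bool" where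
  "is_orientation E \<Gamma> \<longleftrightarrow> \<Gamma> \<subseteq> E \<and> (\<forall>(i, j)\<in>E. (i, j) \<in> \<Gamma> \<or> (j, i) \<in> \<Gamma>) \<and>
     (\<forall>(i, j)\<in>\<Gamma>. (j, i) \<notin> \<Gamma>)"

definition is_source :: "('a \<times> 'a) set \<Rightarrow> 'a \<Rightarrow> bool" where
  "is_source \<Gamma> i \<longleftrightarrow> (\<forall>j. (j, i) \<notin> \<Gamma>)"

definition is_sink :: "('a \<times> 'a) set \<Rightarrow> 'a \<Rightarrow> bool" where
  "is_sink \<Gamma> i \<longleftrightarrow> (\<forall>j. (i, j) \<notin> \<Gamma>)"

definition reflect :: "'a \<Rightarrow> ('a \<times> 'a) set \<Rightarrow> ('a \<times> 'a) set" where
  "reflect i \<Gamma> = {(a, b). (a, b) \<in> \<Gamma> \<and> a \<noteq> i \<and> b \<noteq> i} \<union>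
                  {(b, a) | a b. (a, b) \<in> \<Gamma> \<and> (a = i \<or> b = i)}"

(* A word [i1,...,ir] starting at Gamma: Sigma_{i1} is applied first, then Sigma_{i2}, etc.
   It is composable iff each letter is a source or sink of the current orientation. *)
fun valid_word :: "'a set \<Rightarrow> ('a \<times> 'a) set \<Rightarrow> 'a list \<Rightarrow> bool" where
  "valid_word V \<Gamma> [] = True"
| "valid_word V \<Gamma> (i # w) =
     (i \<in> V \<and> (is_source \<Gamma> i \<or> is_sink \<Gamma> i) \<and> valid_word V (reflect i \<Gamma>) w)"

fun target :: "('a \<times> 'a) set \<Rightarrow> 'a list \<Rightarrow> ('a \<times> 'a) set" where
  "target \<Gamma> [] = \<Gamma>"
| "target \<Gamma> (i # w) = target (reflect i \<Gamma>) w"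

inductive rel_step :: "'a set \<Rightarrow> ('a \<times> 'a) set \<Rightarrow> ('a \<times> 'a) set \<Rightarrow> 'a list \<Rightarrow> 'a list \<Rightarrow> bool"
  for V E \<Gamma> where
  R1_del: "valid_word V \<Gamma> (u @ [i, i] @ v) \<Longrightarrow> valid_word V \<Gamma> (u @ v) \<Longrightarrow>
           rel_step V E \<Gamma> (u @ [i, i] @ v) (u @ v)"
| R1_ins: "valid_word V \<Gamma> (u @ [i, i] @ v) \<Longrightarrow> valid_word V \<Gamma> (u @ v) \<Longrightarrow>
           rel_step V E \<Gamma> (u @ v) (u @ [i, i] @ v)"
| R2: "valid_word V \<Gamma> (u @ [i, j] @ v) \<Longrightarrow> valid_word V \<Gamma> (u @ [j, i] @ v) \<Longrightarrow>
       (i, j) \<notin> E \<Longrightarrow> rel_step V E \<Gamma> (u @ [i, j] @ v) (u @ [j, i] @ v)"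

definition same_morphism :: "'a set \<Rightarrow> ('a \<times> 'a) set \<Rightarrow> ('a \<times> 'a) set \<Rightarrow> 'a list \<Rightarrow> 'a list \<Rightarrow> bool" where
  "same_morphism V E \<Gamma> w w' \<longleftrightarrow> (rel_step V E \<Gamma>)\<^sup>*\<^sup>* w w'"

end

theory Submission
  imports Defs
begin

lemma mem_reflect: "(a,b) \<in> reflect i G \<longleftrightarrow> (a\<noteq>i \<and> b\<noteq>i \<and> (a,b)\<in>G) \<or> ((a=i \<or> b=i) \<and> (b,a)\<in>G)"
  unfolding reflect_def by blast

lemma reflect_invol: "reflect i (reflect i G) = G"
  by (auto simp: mem_reflect)

lemma reflect_orient: "is_orientation E G \<Longrightarrow> sym E \<Longrightarrow> is_orientation E (reflect i G)"
  unfolding is_orientation_def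
  apply (intro conjI)
    apply (clarsimp simp: mem_reflect; metis subsetD symD)
   apply (clarsimp simp: mem_reflect; blast)
  apply (clarsimp simp: mem_reflect; blast)
  done

lemma target_append: "target G (u @ v) = target (target G u) v"
  by (induction u arbitrary: G) auto

lemma valid_append: "valid_word V G (u @ v) \<longleftrightarrow> valid_word V G u \<and> valid_word V (target G u) v"
  by (induction u arbitrary: G) auto

lemma target_orient: "is_orientation E G \<Longrightarrow> sym E \<Longrightarrow> is_orientation E (target G u)"
  by (induction u arbitrary: G) (auto simp: reflect_orient)

lemma valid_set: "valid_word V G u \<Longrightarrow> set u \<subseteq> V"
  by (induction u arbitrary: G) auto

lemma reflect_comm: "x\<noteq>v \<Longrightarrow> (x,v)\<notin>G \<Longrightarrow> (v,x)\<notin>G \<Longrightarrow> reflect x (reflect v G) = reflect v (reflect x G)"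
  by (auto simp: mem_reflect)

lemma src_pres: "x\<noteq>v \<Longrightarrow> (x,v)\<notin>G \<Longrightarrow> (v,x)\<notin>G \<Longrightarrow> is_source (reflect x G) v = is_source G v"
  unfolding is_source_def by (auto simp: mem_reflect)

lemma sink_pres: "x\<noteq>v \<Longrightarrow> (x,v)\<notin>G \<Longrightarrow> (v,x)\<notin>G \<Longrightarrow> is_sink (reflect x G) v = is_sink G v"
  unfolding is_sink_def by (auto simp: mem_reflect)

lemma valid_swap:
  assumes "valid_word V G (p @ [x,v] @ s)" "is_orientation E G" "sym E"
    "x \<noteq> v" "(x,v)\<notin>E" "(v,x)\<notin>E"
  shows "valid_word V G (p @ [v,x] @ s)"
proof -
  let ?H = "target G p"
  have o: "is_orientation E ?H" using assms target_orient by blast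
  hence n: "(x,v)\<notin>?H" "(v,x)\<notin>?H" using assms(5,6) unfolding is_orientation_def by auto
  have n2: "(x,v)\<notin>reflect v ?H" "(v,x)\<notin>reflect v ?H" using n assms(4) by (auto simp: mem_reflect)
  have n3: "(x,v)\<notin>reflect x ?H" "(v,x)\<notin>reflect x ?H" using n assms(4) by (auto simp: mem_reflect)
  show ?thesis using assms(1,4) n n2 n3
    by (auto simp: valid_append src_pres sink_pres reflect_comm[OF assms(4) n])
qed

lemma cancel:
  assumes "valid_word V G (u @ [v] @ m @ [v] @ z)" "is_orientation E G" "sym E"
    "\<forall>x\<in>set m. x \<noteq> v \<and> (x,v)\<notin>E \<and> (v,x)\<notin>E"
  shows "(rel_step V E G)\<^sup>*\<^sup>* (u @ [v] @ m @ [v] @ z) (u @ m @ z)"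
  using assms
proof (induction m arbitrary: z rule: rev_induct)
  case Nil
  have "valid_word V G (u @ z)" using Nil(1) by (auto simp: valid_append reflect_invol)
  then show ?case using rel_step.R1_del[of V G u v z E] Nil(1) by auto
next
  case (snoc x m)
  have e: "u @ [v] @ (m @ [x]) @ [v] @ z = (u @ [v] @ m) @ [x,v] @ z" by simp
  have e2: "(u @ [v] @ m) @ [v,x] @ z = u @ [v] @ m @ [v] @ (x # z)" by simp
  have x: "x \<noteq> v" "(x,v)\<notin>E" "(v,x)\<notin>E" using snoc.prems(4) by auto
  have v1: "valid_word V G ((u @ [v] @ m) @ [x,v] @ z)" using snoc.prems(1) by simp
  have v2: "valid_word V G ((u @ [v] @ m) @ [v,x] @ z)"
    using valid_swap[OF v1 snoc.prems(2,3) x] .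
  have s1: "rel_step V E G ((u @ [v] @ m) @ [x,v] @ z) ((u @ [v] @ m) @ [v,x] @ z)"
    using rel_step.R2[OF v1 v2 x(2)] .
  have s2: "(rel_step V E G)\<^sup>*\<^sup>* (u @ [v] @ m @ [v] @ (x # z)) (u @ m @ (x # z))"
    using snoc.IH[of "x # z"] snoc.prems v2 by (simp add: e2[symmetric])
  show ?case using s1 s2 unfolding e e2 by simp
qed


definition st :: "('a \<times> 'a) set \<Rightarrow> 'a list \<Rightarrow> nat \<Rightarrow> ('a \<times> 'a) set" where
  "st G w t = target G (take t w)"

lemma st_Suc: "t < length w \<Longrightarrow> st G w (Suc t) = reflect (w!t) (st G w t)"
  by (simp add: st_def take_Suc_conv_app_nth target_append)

lemma valid_nth: "valid_word V G w \<Longrightarrow> t < length w \<Longrightarrow>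
   w!t \<in> V \<and> (is_source (st G w t) (w!t) \<or> is_sink (st G w t) (w!t))"
proof -
  assume a: "valid_word V G w" "t < length w"
  have "w = take t w @ (w!t # drop (Suc t) w)" using a(2) by (simp add: Cons_nth_drop_Suc)
  then have "valid_word V G (take t w @ (w!t # drop (Suc t) w))" using a(1) by simp
  then show ?thesis by (simp add: valid_append st_def)
qed

lemma st_const: "(\<forall>r. p \<le> r \<and> r < q \<longrightarrow> w!r \<noteq> a \<and> w!r \<noteq> b) \<Longrightarrow> p \<le> q \<Longrightarrow> q \<le> length w \<Longrightarrow>
   ((a,b) \<in> st G w q \<longleftrightarrow> (a,b) \<in> st G w p)"
proof (induction q)
  case 0 then show ?case by simp
next
  case (Suc q)
  show ?case
  proof (cases "p = Suc q")
    case False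
    then have "p \<le> q" using Suc by simp
    then show ?thesis using Suc by (auto simp: st_Suc mem_reflect)
  qed simp
qed

lemma st_flip: "t < length w \<Longrightarrow> w!t = a \<or> w!t = b \<Longrightarrow> a \<noteq> b \<Longrightarrow>
   ((a,b) \<in> st G w (Suc t) \<longleftrightarrow> (b,a) \<in> st G w t)"
  by (auto simp: st_Suc mem_reflect)

lemma st_orient: "is_orientation E G \<Longrightarrow> sym E \<Longrightarrow> is_orientation E (st G w t)"
  by (simp add: st_def target_orient)

lemma orient_edge: "is_orientation E G \<Longrightarrow> (a,b) \<in> E \<Longrightarrow> ((a,b) \<in> G \<longleftrightarrow> (b,a) \<notin> G)"
  unfolding is_orientation_def by blast

definition OP :: "('a \<times> 'a) set \<Rightarrow> 'a list \<Rightarrow> nat \<Rightarrow> nat \<Rightarrow> bool" where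
  "OP G w p q \<longleftrightarrow> p < q \<and> q < length w \<and> w!p = w!q \<and> (\<forall>r. p < r \<and> r < q \<longrightarrow> w!r \<noteq> w!p) \<and>
     ((is_sink (st G w p) (w!p) \<and> is_source (st G w q) (w!p)) \<or>
      (is_source (st G w p) (w!p) \<and> is_sink (st G w q) (w!p)))"

context
  fixes V E G w
  assumes symE: "sym E" and irr: "irrefl E" and orG: "is_orientation E G" and vw: "valid_word V G w"
begin

lemma ori: "(a,b) \<in> E \<Longrightarrow> ((a,b) \<in> st G w t \<longleftrightarrow> (b,a) \<notin> st G w t)"
  using orient_edge[OF st_orient[OF orG symE]] by blast

lemma step_lemma:
  assumes op: "OP G w p q" and r0: "p < r0" "r0 < q" and e: "(w!p, w!r0) \<in> E"
  shows "\<exists>r s. OP G w r s \<and> p < r \<and> s < q"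
proof -
  define v where "v = w!p"
  define j where "j = w!r0"
  have vj: "(v,j) \<in> E" using e v_def j_def by simp
  have jv: "j \<noteq> v" using vj irr unfolding irrefl_def by auto
  have ql: "q < length w" and pq: "p < q" and wq: "w!q = v" and nov: "\<forall>r. p < r \<and> r < q \<longrightarrow> w!r \<noteq> v"
    using op unfolding OP_def v_def by auto
  have dir: "(is_sink (st G w p) v \<and> is_source (st G w q) v) \<or> (is_source (st G w p) v \<and> is_sink (st G w q) v)"
    using op unfolding OP_def v_def by auto
  define r where "r = (LEAST r. p < r \<and> w!r = j)"
  have rP: "p < r \<and> w!r = j" unfolding r_def by (rule LeastI[of _ r0]) (use r0 j_def in auto)
  have rle: "r \<le> r0" unfolding r_def by (rule Least_le) (use r0 j_def in auto)
  have rnoj: "\<forall>r'. p < r' \<and> r' < r \<longrightarrow> w!r' \<noteq> j" unfolding r_def using not_less_Least by blast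
  have rq: "r < q" using rle r0 by simp
  have cA: "\<And>a b. {a,b} = {v,j} \<Longrightarrow> ((a,b) \<in> st G w r \<longleftrightarrow> (b,a) \<in> st G w p)"
  proof -
    fix a b assume ab: "{a,b} = {v,j}"
    have "(a,b) \<in> st G w r \<longleftrightarrow> (a,b) \<in> st G w (Suc p)"
    proof (rule st_const)
      have H: "\<forall>r'. Suc p \<le> r' \<and> r' < r \<longrightarrow> w!r' \<noteq> v \<and> w!r' \<noteq> j" using rnoj nov rq by auto
      then show "\<forall>r'. Suc p \<le> r' \<and> r' < r \<longrightarrow> w!r' \<noteq> a \<and> w!r' \<noteq> b" using ab unfolding doubleton_eq_iff by blast
    qed (use rP rq ql in auto)
    also have "\<dots> \<longleftrightarrow> (b,a) \<in> st G w p"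
      by (rule st_flip) (use pq ql ab jv v_def in \<open>auto simp: doubleton_eq_iff\<close>)
    finally show "(a,b) \<in> st G w r \<longleftrightarrow> (b,a) \<in> st G w p" .
  qed
  have vr: "is_source (st G w r) j \<or> is_sink (st G w r) j" using valid_nth[OF vw, of r] rP rq ql by auto
  show ?thesis
  proof (cases "\<exists>s. r < s \<and> s < q \<and> w!s = j")
    case False
    have cB: "\<And>a b. {a,b} = {v,j} \<Longrightarrow> ((a,b) \<in> st G w q \<longleftrightarrow> (b,a) \<in> st G w r)"
    proof -
      fix a b assume ab: "{a,b} = {v,j}"
      have "(a,b) \<in> st G w q \<longleftrightarrow> (a,b) \<in> st G w (Suc r)"
      proof (rule st_const)
        have H: "\<forall>r'. Suc r \<le> r' \<and> r' < q \<longrightarrow> w!r' \<noteq> v \<and> w!r' \<noteq> j" using False nov rP by auto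
        then show "\<forall>r'. Suc r \<le> r' \<and> r' < q \<longrightarrow> w!r' \<noteq> a \<and> w!r' \<noteq> b" using ab unfolding doubleton_eq_iff by blast
      qed (use rP rq ql in auto)
      also have "\<dots> \<longleftrightarrow> (b,a) \<in> st G w r"
        by (rule st_flip) (use rP rq ql ab jv in \<open>auto simp: doubleton_eq_iff\<close>)
      finally show "(a,b) \<in> st G w q \<longleftrightarrow> (b,a) \<in> st G w r" .
    qed
    have C1: "(v,j) \<in> st G w q \<longleftrightarrow> (v,j) \<in> st G w p" using cA[of j v] cB[of v j] by auto
    have C2: "(j,v) \<in> st G w q \<longleftrightarrow> (j,v) \<in> st G w p" using cA[of v j] cB[of j v] by auto
    note C3 = ori[OF vj, of p] ori[OF vj, of q]
    have False
    proof (use dir in \<open>elim disjE conjE\<close>)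
      assume "is_sink (st G w p) v" "is_source (st G w q) v"
      then have "(v,j) \<notin> st G w p" "(j,v) \<notin> st G w q" unfolding is_sink_def is_source_def by auto
      then show False using C1 C2 C3 by blast
    next
      assume "is_source (st G w p) v" "is_sink (st G w q) v"
      then have "(j,v) \<notin> st G w p" "(v,j) \<notin> st G w q" unfolding is_sink_def is_source_def by auto
      then show False using C1 C2 C3 by blast
    qed
    then show ?thesis ..
  next
    case True
    define s where "s = (LEAST s. r < s \<and> s < q \<and> w!s = j)"
    have sP: "r < s \<and> s < q \<and> w!s = j" unfolding s_def using True by (rule LeastI_ex)
    have snoj: "\<forall>r'. r < r' \<and> r' < s \<longrightarrow> w!r' \<noteq> j"
    proof (intro allI impI)
      fix r' assume h: "r < r' \<and> r' < s"
      have "\<not> (r < r' \<and> r' < q \<and> w!r' = j)" using not_less_Least[of r' "\<lambda>s. r < s \<and> s < q \<and> w!s = j"] h unfolding s_def by blast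
      then show "w!r' \<noteq> j" using h sP by auto
    qed
    have cB: "\<And>a b. {a,b} = {v,j} \<Longrightarrow> ((a,b) \<in> st G w s \<longleftrightarrow> (b,a) \<in> st G w r)"
    proof -
      fix a b assume ab: "{a,b} = {v,j}"
      have "(a,b) \<in> st G w s \<longleftrightarrow> (a,b) \<in> st G w (Suc r)"
      proof (rule st_const)
        have H: "\<forall>r'. Suc r \<le> r' \<and> r' < s \<longrightarrow> w!r' \<noteq> v \<and> w!r' \<noteq> j" using snoj nov rP sP by auto
        then show "\<forall>r'. Suc r \<le> r' \<and> r' < s \<longrightarrow> w!r' \<noteq> a \<and> w!r' \<noteq> b" using ab unfolding doubleton_eq_iff by blast
      qed (use sP rq ql in auto)
      also have "\<dots> \<longleftrightarrow> (b,a) \<in> st G w r"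
        by (rule st_flip) (use rP rq ql ab jv in \<open>auto simp: doubleton_eq_iff\<close>)
      finally show "(a,b) \<in> st G w s \<longleftrightarrow> (b,a) \<in> st G w r" .
    qed
    have vs: "is_source (st G w s) j \<or> is_sink (st G w s) j" using valid_nth[OF vw, of s] sP ql by auto
    have jv': "(j,v) \<in> E" using vj symE by (simp add: symD)
    have "(is_sink (st G w r) j \<and> is_source (st G w s) j) \<or> (is_source (st G w r) j \<and> is_sink (st G w s) j)"
    proof (use dir in \<open>elim disjE conjE\<close>)
      assume "is_sink (st G w p) v"
      then have "(v,j) \<notin> st G w p" unfolding is_sink_def by auto
      then have "(j,v) \<in> st G w p" using ori[OF vj, of p] by blast
      then have 1: "(v,j) \<in> st G w r" using cA[of v j] by simp
      then have 2: "(j,v) \<in> st G w s" using cB[of j v] by (simp add: insert_commute)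
      have "is_sink (st G w r) j" using 1 vr unfolding is_source_def by auto
      moreover have "is_source (st G w s) j" using 2 vs unfolding is_sink_def by auto
      ultimately show ?thesis by blast
    next
      assume "is_source (st G w p) v"
      then have "(j,v) \<notin> st G w p" unfolding is_source_def by auto
      then have "(v,j) \<in> st G w p" using ori[OF vj, of p] by blast
      then have 1: "(j,v) \<in> st G w r" using cA[of j v] by (simp add: insert_commute)
      then have 2: "(v,j) \<in> st G w s" using cB[of v j] by simp
      have "is_source (st G w r) j" using 1 vr unfolding is_sink_def by auto
      moreover have "is_sink (st G w s) j" using 2 vs unfolding is_source_def by auto
      ultimately show ?thesis by blast
    qed
    then have "OP G w r s" unfolding OP_def using sP rP ql snoj by auto
    then show ?thesis using rP sP by blast
  qed
qed

lemma descent: "OP G w p q \<Longrightarrow> \<exists>p' q'. OP G w p' q' \<and> (\<forall>r. p' < r \<and> r < q' \<longrightarrow> (w!p', w!r) \<notin> E)"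
proof (induction "q - p" arbitrary: p q rule: less_induct)
  case less
  show ?case
  proof (cases "\<forall>r. p < r \<and> r < q \<longrightarrow> (w!p, w!r) \<notin> E")
    case True thus ?thesis using less.prems by blast
  next
    case False
    then obtain r0 where h: "p < r0" "r0 < q" "(w!p, w!r0) \<in> E" by blast
    from step_lemma[OF less.prems h] obtain r s where rs: "OP G w r s" "p < r" "s < q" by blast
    have "s - r < q - p" using rs by (auto simp: OP_def)
    then show ?thesis using less.hyps rs(1) by blast
  qed
qed

lemma not_reduced:
  assumes "OP G w p0 q0"
  shows "\<exists>w'. (rel_step V E G)\<^sup>*\<^sup>* w w' \<and> length w' < length w"
proof -
  obtain p q where op: "OP G w p q" and ne: "\<forall>r. p < r \<and> r < q \<longrightarrow> (w!p, w!r) \<notin> E"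
    using descent[OF assms] by blast
  have pq: "p < q" and ql: "q < length w" and wq: "w!q = w!p" and nov: "\<forall>r. p < r \<and> r < q \<longrightarrow> w!r \<noteq> w!p"
    using op unfolding OP_def by auto
  define v where "v = w!p"
  define m where "m = take (q - Suc p) (drop (Suc p) w)"
  have d1: "drop p w = v # drop (Suc p) w" using pq ql by (simp add: v_def Cons_nth_drop_Suc)
  have d2: "drop (Suc p) w = m @ drop q w"
  proof -
    have "drop (Suc p) w = m @ drop (q - Suc p) (drop (Suc p) w)" unfolding m_def by (simp only: append_take_drop_id)
    also have "drop (q - Suc p) (drop (Suc p) w) = drop q w" using pq by simp
    finally show ?thesis .
  qed
  have d3: "drop q w = v # drop (Suc q) w" using ql wq by (metis v_def Cons_nth_drop_Suc)
  have dec: "w = take p w @ [v] @ m @ [v] @ drop (Suc q) w"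
    by (metis append_Cons append_Nil append_take_drop_id d1 d2 d3)
  have mset: "\<forall>x\<in>set m. x \<noteq> v \<and> (x,v)\<notin>E \<and> (v,x)\<notin>E"
  proof
    fix x assume "x \<in> set m"
    then obtain i where i: "i < length m" "m!i = x" by (auto simp: in_set_conv_nth)
    have "i < q - Suc p" using i(1) unfolding m_def by simp
    moreover have "m!i = w!(Suc p + i)" using i(1) unfolding m_def using pq ql by (simp add: nth_drop)
    ultimately have "p < Suc p + i" "Suc p + i < q" "x = w!(Suc p + i)" using i by auto
    then have "x \<noteq> v" "(v,x) \<notin> E" using nov ne unfolding v_def by auto
    moreover have "(x,v) \<notin> E" using calculation(2) symE by (meson symD)
    ultimately show "x \<noteq> v \<and> (x,v)\<notin>E \<and> (v,x)\<notin>E" by blast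
  qed
  have vw': "valid_word V G (take p w @ [v] @ m @ [v] @ drop (Suc q) w)" using vw dec by simp
  have "(rel_step V E G)\<^sup>*\<^sup>* (take p w @ [v] @ m @ [v] @ drop (Suc q) w) (take p w @ m @ drop (Suc q) w)"
    by (rule cancel[OF vw' orG symE mset])
  moreover have "length (take p w @ m @ drop (Suc q) w) < length w"
    using pq ql unfolding m_def by simp
  ultimately show ?thesis using dec by metis
qed

lemma exists_OP:
  assumes vu: "(v,u) \<in> E" and vin: "v \<in> set w" and uin: "u \<notin> set w" and tg: "target G w = G"
  shows "\<exists>p q. OP G w p q"
proof -
  have uv: "u \<noteq> v" using vu irr unfolding irrefl_def by auto
  define p where "p = (LEAST p. p < length w \<and> w!p = v)"
  have ex: "\<exists>p. p < length w \<and> w!p = v" using vin by (auto simp: in_set_conv_nth)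
  have pP: "p < length w \<and> w!p = v" unfolding p_def using ex by (rule LeastI_ex)
  have pmin: "\<forall>r. r < p \<longrightarrow> w!r \<noteq> v"
  proof (intro allI impI)
    fix r assume "r < p"
    then have "\<not> (r < length w \<and> w!r = v)" using not_less_Least[of r "\<lambda>p. p < length w \<and> w!p = v"] unfolding p_def by blast
    then show "w!r \<noteq> v" using \<open>r < p\<close> pP by auto
  qed
  have nou: "\<forall>r. r < length w \<longrightarrow> w!r \<noteq> u" using uin nth_mem by blast
  have st0: "st G w 0 = G" by (simp add: st_def)
  have stl: "st G w (length w) = G" using tg by (simp add: st_def)
  have cp: "\<And>a b. {a,b} = {v,u} \<Longrightarrow> ((a,b) \<in> st G w p \<longleftrightarrow> (a,b) \<in> G)"
  proof -
    fix a b assume ab: "{a,b} = {v,u}"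
    have "(a,b) \<in> st G w p \<longleftrightarrow> (a,b) \<in> st G w 0"
    proof (rule st_const)
      have H: "\<forall>r'. 0 \<le> r' \<and> r' < p \<longrightarrow> w!r' \<noteq> v \<and> w!r' \<noteq> u" using pmin nou pP by auto
      then show "\<forall>r'. 0 \<le> r' \<and> r' < p \<longrightarrow> w!r' \<noteq> a \<and> w!r' \<noteq> b" using ab unfolding doubleton_eq_iff by blast
    qed (use pP in auto)
    then show "(a,b) \<in> st G w p \<longleftrightarrow> (a,b) \<in> G" using st0 by simp
  qed
  have fl: "\<And>a b. {a,b} = {v,u} \<Longrightarrow> ((a,b) \<in> st G w (Suc p) \<longleftrightarrow> (b,a) \<in> st G w p)"
  proof -
    fix a b assume ab: "{a,b} = {v,u}"
    show "((a,b) \<in> st G w (Suc p) \<longleftrightarrow> (b,a) \<in> st G w p)"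
      by (rule st_flip) (use pP ab uv in \<open>auto simp: doubleton_eq_iff\<close>)
  qed
  show ?thesis
  proof (cases "\<exists>q. p < q \<and> q < length w \<and> w!q = v")
    case False
    have "(v,u) \<in> st G w (length w) \<longleftrightarrow> (v,u) \<in> st G w (Suc p)"
    proof (rule st_const)
      show "\<forall>r'. Suc p \<le> r' \<and> r' < length w \<longrightarrow> w!r' \<noteq> v \<and> w!r' \<noteq> u" using False nou by auto
    qed (use pP in auto)
    then have "(v,u) \<in> G \<longleftrightarrow> (u,v) \<in> G" using stl fl[of v u] cp[of u v] by (simp add: insert_commute)
    moreover have "(v,u) \<in> G \<longleftrightarrow> (u,v) \<notin> G" using ori[OF vu, of 0] st0 by simp
    ultimately show ?thesis by blast
  next
    case True
    define q where "q = (LEAST q. p < q \<and> q < length w \<and> w!q = v)"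
    have qP: "p < q \<and> q < length w \<and> w!q = v" unfolding q_def using True by (rule LeastI_ex)
    have qmin: "\<forall>r. p < r \<and> r < q \<longrightarrow> w!r \<noteq> v"
    proof (intro allI impI)
      fix r assume h: "p < r \<and> r < q"
      have "\<not> (p < r \<and> r < length w \<and> w!r = v)" using not_less_Least[of r "\<lambda>q. p < q \<and> q < length w \<and> w!q = v"] h unfolding q_def by blast
      then show "w!r \<noteq> v" using h qP by auto
    qed
    have cq: "\<And>a b. {a,b} = {v,u} \<Longrightarrow> ((a,b) \<in> st G w q \<longleftrightarrow> (b,a) \<in> st G w p)"
    proof -
      fix a b assume ab: "{a,b} = {v,u}"
      have "(a,b) \<in> st G w q \<longleftrightarrow> (a,b) \<in> st G w (Suc p)"
      proof (rule st_const)
        have H: "\<forall>r'. Suc p \<le> r' \<and> r' < q \<longrightarrow> w!r' \<noteq> v \<and> w!r' \<noteq> u" using qmin nou qP by auto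
        then show "\<forall>r'. Suc p \<le> r' \<and> r' < q \<longrightarrow> w!r' \<noteq> a \<and> w!r' \<noteq> b" using ab unfolding doubleton_eq_iff by blast
      qed (use qP in auto)
      then show "(a,b) \<in> st G w q \<longleftrightarrow> (b,a) \<in> st G w p" using fl[OF ab] by simp
    qed
    have vp: "is_source (st G w p) v \<or> is_sink (st G w p) v" using valid_nth[OF vw, of p] pP by auto
    have vq: "is_source (st G w q) v \<or> is_sink (st G w q) v" using valid_nth[OF vw, of q] qP by auto
    have "(is_sink (st G w p) v \<and> is_source (st G w q) v) \<or> (is_source (st G w p) v \<and> is_sink (st G w q) v)"
    proof (use vp in \<open>elim disjE\<close>)
      assume "is_sink (st G w p) v"
      then have "(v,u) \<notin> st G w p" unfolding is_sink_def by auto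
      then have "(u,v) \<in> st G w p" using ori[OF vu, of p] by blast
      then have "(v,u) \<in> st G w q" using cq[of v u] by simp
      then have "is_source (st G w q) v" using vq unfolding is_sink_def by auto
      then show ?thesis using \<open>is_sink (st G w p) v\<close> by blast
    next
      assume "is_source (st G w p) v"
      then have "(u,v) \<notin> st G w p" unfolding is_source_def by auto
      then have "(v,u) \<in> st G w p" using ori[OF vu, of p] by blast
      then have "(u,v) \<in> st G w q" using cq[of u v] by (simp add: insert_commute)
      then have "is_sink (st G w q) v" using vq unfolding is_source_def by auto
      then show ?thesis using \<open>is_source (st G w p) v\<close> by blast
    qed
    then have "OP G w p q" unfolding OP_def using pP qP qmin by auto
    then show ?thesis by blast
  qed
qed

end

lemma crossing: "(x,y) \<in> R\<^sup>* \<Longrightarrow> x \<in> S \<Longrightarrow> y \<notin> S \<Longrightarrow> \<exists>a b. (a,b) \<in> R \<and> a \<in> S \<and> b \<notin> S"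
  by (induction rule: rtrancl_induct) auto

theorem mainTheorem18:
  fixes V :: "'a set" and E :: "('a \<times> 'a) set" and \<Gamma> :: "('a \<times> 'a) set" and w :: "'a list"
  assumes "is_tree V E"
    and "is_orientation E \<Gamma>"
    and "valid_word V \<Gamma> w"
    and "target \<Gamma> w = \<Gamma>"
    and "\<not> same_morphism V E \<Gamma> w []"
    and "\<forall>w'. same_morphism V E \<Gamma> w w' \<longrightarrow> length w \<le> length w'"
  shows "\<forall>i\<in>V. i \<in> set w"
proof (rule ccontr)
  assume "\<not> (\<forall>i\<in>V. i \<in> set w)"
  then obtain k where k: "k \<in> V" "k \<notin> set w" by blast
  have symE: "sym E" and irr: "irrefl E" and conn: "\<forall>x\<in>V. \<forall>y\<in>V. (x, y) \<in> E\<^sup>*"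
    using assms(1) unfolding is_tree_def by auto
  have "w \<noteq> []" using assms(5) unfolding same_morphism_def by auto
  then have h: "hd w \<in> set w" by simp
  moreover have "hd w \<in> V" using h valid_set[OF assms(3)] by auto
  ultimately obtain v u where vu: "(v,u) \<in> E" "v \<in> set w" "u \<notin> set w"
    using crossing[of "hd w" k E "set w"] conn k by blast
  obtain p q where "OP \<Gamma> w p q" using exists_OP[OF symE irr assms(2,3) vu assms(4)] by blast
  from not_reduced[OF symE irr assms(2,3) this] obtain w' where
    "(rel_step V E \<Gamma>)\<^sup>*\<^sup>* w w'" "length w' < length w" by blast
  then show False using assms(6) unfolding same_morphism_def by fastforce
qed

end
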